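(* Let $S$ be an operator system with quasistate space $K\subseteq S^*$. Then $S$ is approximately positively generated if and only if $S^+$ separates the points of $K$.
   Context: An operator system here is a (possibly nonunital) matrix ordered operator space $S$ admitting a completely isometric complete order embedding into some $B(H)$; $S^+$ is its first-level positive cone. The quasistate space is $K=\{\phi\in S^*:\|\phi\|\le1,\ \phi(S^+)\subseteq[0,\infty)\}$. $S$ is approximately positively generated if $S^+-S^+$ is norm-dense in the selfadjoint part $S^{sa}$. "$S^+$ separates points of $K$" means that for distinct $\phi,\psi\in K$ there is $p\in S^+$ with $\phi(p)\ne\psi(p)$. *)

theory Defs
  imports Complex_Main
begin

definition hnorm :: "('h \<Rightarrow> 'h \<Rightarrow> complex) \<Rightarrow> 'h \<Rightarrow> real" where
  "hnorm ip x = sqrt (Re (ip x x))"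

definition hilbert_space ::
  "(complex \<Rightarrow> 'h::ab_group_add \<Rightarrow> 'h) \<Rightarrow> ('h \<Rightarrow> 'h \<Rightarrow> complex) \<Rightarrow> bool" where
  "hilbert_space sc ip \<longleftrightarrow>
     (\<forall>a x y. sc a (x + y) = sc a x + sc a y) \<and>
     (\<forall>a b x. sc (a + b) x = sc a x + sc b x) \<and>
     (\<forall>a b x. sc a (sc b x) = sc (a * b) x) \<and>
     (\<forall>x. sc 1 x = x) \<and>
     (\<forall>x y z. ip (x + y) z = ip x z + ip y z) \<and>
     (\<forall>a x y. ip (sc a x) y = a * ip x y) \<and>
     (\<forall>x y. ip y x = cnj (ip x y)) \<and>
     (\<forall>x. 0 \<le> Re (ip x x)) \<and>
     (\<forall>x. ip x x = 0 \<longrightarrow> x = 0) \<and>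
     (\<forall>X :: nat \<Rightarrow> 'h.
        (\<forall>e>0. \<exists>N. \<forall>m\<ge>N. \<forall>n\<ge>N. hnorm ip (X m - X n) < e) \<longrightarrow>
        (\<exists>L. \<forall>e>0. \<exists>N. \<forall>n\<ge>N. hnorm ip (X n - L) < e))"

definition bounded_op ::
  "(complex \<Rightarrow> 'h::ab_group_add \<Rightarrow> 'h) \<Rightarrow> ('h \<Rightarrow> 'h \<Rightarrow> complex) \<Rightarrow> ('h \<Rightarrow> 'h) \<Rightarrow> bool" where
  "bounded_op sc ip T \<longleftrightarrow>
     (\<forall>x y. T (x + y) = T x + T y) \<and> (\<forall>a x. T (sc a x) = sc a (T x)) \<and>
     (\<exists>C. \<forall>x. hnorm ip (T x) \<le> C * hnorm ip x)"

definition opnorm :: "('h \<Rightarrow> 'h \<Rightarrow> complex) \<Rightarrow> ('h \<Rightarrow> 'h) \<Rightarrow> real" where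
  "opnorm ip T = Sup ((\<lambda>x. hnorm ip (T x)) ` {x. hnorm ip x \<le> 1})"

definition adj :: "('h \<Rightarrow> 'h \<Rightarrow> complex) \<Rightarrow> ('h \<Rightarrow> 'h) \<Rightarrow> ('h \<Rightarrow> 'h)" where
  "adj ip T = (THE A. \<forall>x y. ip (T x) y = ip x (A y))"

definition pos_op :: "('h \<Rightarrow> 'h \<Rightarrow> complex) \<Rightarrow> ('h \<Rightarrow> 'h) \<Rightarrow> bool" where
  "pos_op ip T \<longleftrightarrow> (\<forall>x. Im (ip (T x) x) = 0 \<and> 0 \<le> Re (ip (T x) x))"

text \<open>A (concrete, possibly nonunital) operator system: a self-adjoint complex subspace
 of B(H), with norm the operator norm and matrix order inherited from B(H).\<close>
definition operator_system ::
  "(complex \<Rightarrow> 'h::ab_group_add \<Rightarrow> 'h) \<Rightarrow> ('h \<Rightarrow> 'h \<Rightarrow> complex) \<Rightarrow> ('h \<Rightarrow> 'h) set \<Rightarrow> bool" where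
  "operator_system sc ip S \<longleftrightarrow>
     hilbert_space sc ip \<and>
     (\<forall>T\<in>S. bounded_op sc ip T) \<and>
     (\<lambda>x. 0) \<in> S \<and>
     (\<forall>T\<in>S. \<forall>U\<in>S. (\<lambda>x. T x + U x) \<in> S) \<and>
     (\<forall>a. \<forall>T\<in>S. (\<lambda>x. sc a (T x)) \<in> S) \<and>
     (\<forall>T\<in>S. adj ip T \<in> S)"

definition pos_cone :: "('h \<Rightarrow> 'h \<Rightarrow> complex) \<Rightarrow> ('h \<Rightarrow> 'h) set \<Rightarrow> ('h \<Rightarrow> 'h) set" where
  "pos_cone ip S = {T\<in>S. pos_op ip T}"

definition sa_part :: "('h \<Rightarrow> 'h \<Rightarrow> complex) \<Rightarrow> ('h \<Rightarrow> 'h) set \<Rightarrow> ('h \<Rightarrow> 'h) set" where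
  "sa_part ip S = {T\<in>S. adj ip T = T}"

text \<open>Quasistate space K: complex-linear functionals on S (represented extensionally,
 i.e. zero off S) of norm at most 1 that are nonnegative on S^+.\<close>
definition quasistates ::
  "(complex \<Rightarrow> 'h::ab_group_add \<Rightarrow> 'h) \<Rightarrow> ('h \<Rightarrow> 'h \<Rightarrow> complex) \<Rightarrow> ('h \<Rightarrow> 'h) set
    \<Rightarrow> (('h \<Rightarrow> 'h) \<Rightarrow> complex) set" where
  "quasistates sc ip S = {\<phi>.
     (\<forall>T. T \<notin> S \<longrightarrow> \<phi> T = 0) \<and>
     (\<forall>T\<in>S. \<forall>U\<in>S. \<phi> (\<lambda>x. T x + U x) = \<phi> T + \<phi> U) \<and>
     (\<forall>a. \<forall>T\<in>S. \<phi> (\<lambda>x. sc a (T x)) = a * \<phi> T) \<and>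
     (\<forall>T\<in>S. cmod (\<phi> T) \<le> opnorm ip T) \<and>
     (\<forall>p\<in>pos_cone ip S. Im (\<phi> p) = 0 \<and> 0 \<le> Re (\<phi> p))}"

definition approx_pos_generated :: "('h::ab_group_add \<Rightarrow> 'h \<Rightarrow> complex) \<Rightarrow> ('h \<Rightarrow> 'h) set \<Rightarrow> bool" where
  "approx_pos_generated ip S \<longleftrightarrow>
     (\<forall>T\<in>sa_part ip S. \<forall>e>0. \<exists>p\<in>pos_cone ip S. \<exists>q\<in>pos_cone ip S.
        opnorm ip (\<lambda>x. T x - (p x - q x)) < e)"

definition separates_points :: "('h \<Rightarrow> 'h) set \<Rightarrow> (('h \<Rightarrow> 'h) \<Rightarrow> complex) set \<Rightarrow> bool" where
  "separates_points P K \<longleftrightarrow> (\<forall>\<phi>\<in>K. \<forall>\<psi>\<in>K. \<phi> \<noteq> \<psi> \<longrightarrow> (\<exists>p\<in>P. \<phi> p \<noteq> \<psi> p))"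

end

theory Submission
  imports Defs "HOL-Library.Function_Algebras"
begin

locale rvs =
  fixes V :: "'a::ab_group_add set" and smul :: "real \<Rightarrow> 'a \<Rightarrow> 'a"
  assumes V0: "0 \<in> V" and Vadd: "\<And>x y. x \<in> V \<Longrightarrow> y \<in> V \<Longrightarrow> x + y \<in> V"
    and Vsm: "\<And>r x. x \<in> V \<Longrightarrow> smul r x \<in> V"
    and sm_add: "\<And>a x y. smul a (x + y) = smul a x + smul a y"
    and sm_radd: "\<And>a b x. smul (a + b) x = smul a x + smul b x"
    and sm_sm: "\<And>a b x. smul a (smul b x) = smul (a * b) x"
    and sm_one: "\<And>x. smul 1 x = x"
begin

lemma sm_zero[simp]: "smul 0 x = 0"
  using sm_radd[of 0 0 x] by simp

lemma sm_zero_right[simp]: "smul a 0 = 0"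
  using sm_add[of a 0 0] by simp

lemma sm_neg: "smul (- a) x = - smul a x"
  using minus_unique[of "smul a x" "smul (-a) x"] sm_radd[of a "-a" x] by simp

lemma sm_minus_right: "smul a (- x) = - smul a x"
  using minus_unique[of "smul a x" "smul a (-x)"] sm_add[of a x "-x"] by simp

lemma sm_diff: "smul a (x - y) = smul a x - smul a y"
  using sm_add[of a x "-y"] sm_minus_right by simp

lemma Vneg: "x \<in> V \<Longrightarrow> - x \<in> V"
proof -
  assume "x \<in> V"
  then have "smul (- 1) x \<in> V" by (rule Vsm)
  moreover have "smul (- 1) x = - x" by (subst sm_neg) (simp add: sm_one)
  ultimately show ?thesis by simp
qed

lemma Vdiff: "x \<in> V \<Longrightarrow> y \<in> V \<Longrightarrow> x - y \<in> V"
  unfolding diff_conv_add_uminus by (rule Vadd, assumption, rule Vneg)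

definition lgraph :: "('a \<Rightarrow> real) \<Rightarrow> ('a \<times> real) set \<Rightarrow> bool" where
  "lgraph p G \<longleftrightarrow> (\<forall>x a. (x, a) \<in> G \<longrightarrow> x \<in> V \<and> a \<le> p x) \<and>
     (\<forall>x a y b. (x, a) \<in> G \<longrightarrow> (y, b) \<in> G \<longrightarrow> (x + y, a + b) \<in> G) \<and>
     (\<forall>r x a. (x, a) \<in> G \<longrightarrow> (smul r x, r * a) \<in> G) \<and>
     (\<forall>x a b. (x, a) \<in> G \<longrightarrow> (x, b) \<in> G \<longrightarrow> a = b)"

lemma lgraph_ext:
  assumes p_add: "\<And>x y. x \<in> V \<Longrightarrow> y \<in> V \<Longrightarrow> p (x + y) \<le> p x + p y"
    and p_sm: "\<And>r x. r > 0 \<Longrightarrow> x \<in> V \<Longrightarrow> p (smul r x) = r * p x"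
    and G: "lgraph p G" and Gne: "G \<noteq> {}" and x0: "x0 \<in> V" and nx0: "\<And>a. (x0, a) \<notin> G"
  shows "\<exists>G'. lgraph p G' \<and> G \<subseteq> G' \<and> G' \<noteq> G"
proof -
  have GV: "\<And>x a. (x, a) \<in> G \<Longrightarrow> x \<in> V" and Gp: "\<And>x a. (x, a) \<in> G \<Longrightarrow> a \<le> p x"
    and Gadd: "\<And>x a y b. (x, a) \<in> G \<Longrightarrow> (y, b) \<in> G \<Longrightarrow> (x + y, a + b) \<in> G"
    and Gsm: "\<And>r x a. (x, a) \<in> G \<Longrightarrow> (smul r x, r * a) \<in> G"
    and Gfun: "\<And>x a b. (x, a) \<in> G \<Longrightarrow> (x, b) \<in> G \<Longrightarrow> a = b"
    using G unfolding lgraph_def by blast+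
  obtain x1 a1 where "(x1, a1) \<in> G" using Gne by auto
  from Gsm[OF this, of 0] have G00: "(0, 0) \<in> G" by simp
  define L where "L = {a - p (y - x0) | y a. (y, a) \<in> G}"
  have key: "a - p (y - x0) \<le> p (z + x0) - b" if "(y, a) \<in> G" "(z, b) \<in> G" for y a z b
  proof -
    have "a + b \<le> p (y + z)" using Gp[OF Gadd[OF that]] .
    also have "y + z = (y - x0) + (z + x0)" by simp
    also have "p \<dots> \<le> p (y - x0) + p (z + x0)"
      by (rule p_add[OF Vdiff[OF GV[OF that(1)] x0] Vadd[OF GV[OF that(2)] x0]])
    finally show ?thesis by simp
  qed
  define c where "c = Sup L"
  have Lne: "L \<noteq> {}" using G00 unfolding L_def by blast
  have Lbdd: "bdd_above L" unfolding L_def bdd_above_def using key[OF _ G00] by auto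
  have cL: "a - p (y - x0) \<le> c" if "(y, a) \<in> G" for y a
    unfolding c_def by (rule cSup_upper[OF _ Lbdd]) (use that L_def in blast)
  have cU: "c \<le> p (z + x0) - b" if "(z, b) \<in> G" for z b
    unfolding c_def by (rule cSup_least[OF Lne]) (use that key L_def in blast)
  define G' where "G' = {(y + smul t x0, a + t * c) | y a t. (y, a) \<in> G}"
  have G'I: "(y + smul t x0, a + t * c) \<in> G'" if "(y, a) \<in> G" for y a t
    unfolding G'_def using that by blast
  have "lgraph p G'"
    unfolding lgraph_def
  proof (intro conjI allI impI)
    fix x a assume "(x, a) \<in> G'"
    then obtain y b t where xa: "x = y + smul t x0" "a = b + t * c" and yb: "(y, b) \<in> G"
      unfolding G'_def by blast
    show "x \<in> V" unfolding xa(1) by (rule Vadd[OF GV[OF yb] Vsm[OF x0]])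
    show "a \<le> p x"
    proof (cases "t = 0")
      case True then show ?thesis using xa Gp[OF yb] by simp
    next
      case False
      show ?thesis
      proof (cases "t > 0")
        case True
        have "(smul (1/t) y, (1/t) * b) \<in> G" using Gsm[OF yb] .
        from cU[OF this] have "t * c \<le> t * (p (smul (1/t) y + x0) - (1/t) * b)"
          using True by (simp add: mult_left_mono)
        also have "\<dots> = t * p (smul (1/t) y + x0) - b"
          using True by (simp add: algebra_simps)
        also have "t * p (smul (1/t) y + x0) = p (smul t (smul (1/t) y + x0))"
          by (rule p_sm[OF True Vadd[OF Vsm[OF GV[OF yb]] x0], symmetric])
        also have "smul t (smul (1/t) y + x0) = y + smul t x0"
          using True by (simp add: sm_add sm_sm sm_one)
        finally show ?thesis using xa by simp
      next
        case False
        define s where "s = - t"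
        have s: "s > 0" using False \<open>t \<noteq> 0\<close> s_def by simp
        have "(smul (1/s) y, (1/s) * b) \<in> G" using Gsm[OF yb] .
        from cL[OF this] have "s * ((1/s) * b - p (smul (1/s) y - x0)) \<le> s * c"
          using s by (simp add: mult_left_mono)
        then have "b - s * p (smul (1/s) y - x0) \<le> s * c" using s by (simp add: algebra_simps)
        also have "s * p (smul (1/s) y - x0) = p (smul s (smul (1/s) y - x0))"
          by (rule p_sm[OF s Vdiff[OF Vsm[OF GV[OF yb]] x0], symmetric])
        also have "smul s (smul (1/s) y - x0) = y + smul t x0"
        proof -
          have "smul s (smul (1/s) y - x0) = y - smul s x0" using s by (simp add: sm_diff sm_sm sm_one)
          also have "\<dots> = y + smul t x0" using sm_neg[of t x0] unfolding s_def by simp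
          finally show ?thesis .
        qed
        finally show ?thesis using xa s_def by simp
      qed
    qed
  next
    fix x a y b assume "(x, a) \<in> G'" "(y, b) \<in> G'"
    then obtain x' a' t y' b' u where "x = x' + smul t x0" "a = a' + t * c" "(x', a') \<in> G"
      "y = y' + smul u x0" "b = b' + u * c" "(y', b') \<in> G"
      unfolding G'_def by blast
    then have "x + y = (x' + y') + smul (t + u) x0" "a + b = (a' + b') + (t + u) * c"
      by (simp_all add: sm_radd algebra_simps)
    then show "(x + y, a + b) \<in> G'" using G'I Gadd \<open>(x', a') \<in> G\<close> \<open>(y', b') \<in> G\<close> by metis
  next
    fix r x a assume "(x, a) \<in> G'"
    then obtain x' a' t where "x = x' + smul t x0" "a = a' + t * c" "(x', a') \<in> G"
      unfolding G'_def by blast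
    then have "smul r x = smul r x' + smul (r * t) x0" "r * a = r * a' + (r * t) * c"
      by (simp_all add: sm_add sm_sm algebra_simps)
    then show "(smul r x, r * a) \<in> G'" using G'I Gsm \<open>(x', a') \<in> G\<close> by metis
  next
    fix x a b assume "(x, a) \<in> G'" "(x, b) \<in> G'"
    then obtain y a' t y' b' u where e: "x = y + smul t x0" "a = a' + t * c" and ya: "(y, a') \<in> G"
      and e2: "x = y' + smul u x0" "b = b' + u * c" and yb: "(y', b') \<in> G"
      unfolding G'_def by blast
    have tu: "t = u"
    proof (rule ccontr)
      assume "t \<noteq> u"
      have "(y' + smul (-1) y, b' + (-1) * a') \<in> G" using Gadd[OF yb Gsm[OF ya]] .
      then have d: "(y' - y, b' - a') \<in> G" by (simp add: sm_neg sm_one)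
      have h1: "smul t x0 = smul u x0 + smul (t - u) x0" using sm_radd[of u "t - u" x0] by simp
      have "y + (smul u x0 + smul (t - u) x0) = y' + smul u x0" using e(1) e2(1) h1 by simp
      then have "smul (t - u) x0 + (y + smul u x0) = y' + smul u x0" by (simp add: ac_simps)
      then have "smul (t - u) x0 + y = y'" by (simp add: add.assoc[symmetric])
      then have "smul (t - u) x0 = y' - y" by (simp add: eq_diff_eq)
      then have "x0 = smul (1 / (t - u)) (y' - y)"
        using \<open>t \<noteq> u\<close> sm_sm[of "1/(t-u)" "t-u" x0] by (simp add: sm_one)
      then show False using Gsm[OF d, of "1/(t-u)"] nx0 by metis
    qed
    then have "y = y'" using e e2 by simp
    then have "a' = b'" using Gfun ya yb by blast
    then show "a = b" using e e2 tu by simp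
  qed
  moreover have "G \<subseteq> G'"
  proof
    fix z assume "z \<in> G"
    then obtain y a where z: "z = (y, a)" "(y, a) \<in> G" by (cases z) auto
    from G'I[OF z(2), of 0] show "z \<in> G'" using z by simp
  qed
  moreover have "(x0, c) \<in> G'" using G'I[OF G00, of 1] by (simp add: sm_one)
  ultimately show ?thesis using nx0 by blast
qed

lemma lgraphD:
  assumes "lgraph p G"
  shows "\<And>x a. (x, a) \<in> G \<Longrightarrow> x \<in> V" and "\<And>x a. (x, a) \<in> G \<Longrightarrow> a \<le> p x"
    and "\<And>x a y b. (x, a) \<in> G \<Longrightarrow> (y, b) \<in> G \<Longrightarrow> (x + y, a + b) \<in> G"
    and "\<And>r x a. (x, a) \<in> G \<Longrightarrow> (smul r x, r * a) \<in> G"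
    and "\<And>x a b. (x, a) \<in> G \<Longrightarrow> (x, b) \<in> G \<Longrightarrow> a = b"
  using assms unfolding lgraph_def by blast+

lemma hahn_banach:
  assumes p_add: "\<And>x y. x \<in> V \<Longrightarrow> y \<in> V \<Longrightarrow> p (x + y) \<le> p x + p y"
    and p_sm: "\<And>r x. r > 0 \<Longrightarrow> x \<in> V \<Longrightarrow> p (smul r x) = r * p x"
    and G0: "lgraph p G0" and G0ne: "G0 \<noteq> {}"
  shows "\<exists>h. (\<forall>x a. (x, a) \<in> G0 \<longrightarrow> h x = a) \<and> (\<forall>x\<in>V. h x \<le> p x) \<and>
     (\<forall>x\<in>V. \<forall>y\<in>V. h (x + y) = h x + h y) \<and> (\<forall>r. \<forall>x\<in>V. h (smul r x) = r * h x)"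
proof -
  define A where "A = {G. lgraph p G \<and> G0 \<subseteq> G}"
  have "\<forall>C\<in>chains A. \<exists>U\<in>A. \<forall>X\<in>C. X \<subseteq> U"
  proof
    fix C assume C: "C \<in> chains A"
    show "\<exists>U\<in>A. \<forall>X\<in>C. X \<subseteq> U"
    proof (cases "C = {}")
      case True then show ?thesis using G0 A_def by auto
    next
      case False
      have CA: "\<And>X. X \<in> C \<Longrightarrow> lgraph p X \<and> G0 \<subseteq> X" using C unfolding chains_def A_def by auto
      have ch: "\<And>X Y. X \<in> C \<Longrightarrow> Y \<in> C \<Longrightarrow> X \<subseteq> Y \<or> Y \<subseteq> X"
        using C unfolding chains_def chain_subset_def by blast
      have two: "\<exists>Z\<in>C. X \<subseteq> Z \<and> Y \<subseteq> Z" if "X \<in> C" "Y \<in> C" for X Y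
        using ch[OF that] that by blast
      have "lgraph p (\<Union>C)"
        unfolding lgraph_def
      proof (intro conjI allI impI)
        fix x a assume "(x, a) \<in> \<Union>C"
        then obtain X where X: "X \<in> C" "(x, a) \<in> X" by blast
        show "x \<in> V" using lgraphD(1)[OF conjunct1[OF CA[OF X(1)]] X(2)] .
        show "a \<le> p x" using lgraphD(2)[OF conjunct1[OF CA[OF X(1)]] X(2)] .
      next
        fix x a y b assume "(x, a) \<in> \<Union>C" "(y, b) \<in> \<Union>C"
        then obtain X Y where XY: "X \<in> C" "(x, a) \<in> X" "Y \<in> C" "(y, b) \<in> Y" by blast
        then obtain Z where Z: "Z \<in> C" "X \<subseteq> Z" "Y \<subseteq> Z" using two by blast
        have "(x + y, a + b) \<in> Z"
          using lgraphD(3)[OF conjunct1[OF CA[OF Z(1)]]] XY Z by blast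
        then show "(x + y, a + b) \<in> \<Union>C" using Z by blast
      next
        fix r x a assume "(x, a) \<in> \<Union>C"
        then obtain X where X: "X \<in> C" "(x, a) \<in> X" by blast
        have "(smul r x, r * a) \<in> X" using lgraphD(4)[OF conjunct1[OF CA[OF X(1)]] X(2)] .
        then show "(smul r x, r * a) \<in> \<Union>C" using X by blast
      next
        fix x a b assume "(x, a) \<in> \<Union>C" "(x, b) \<in> \<Union>C"
        then obtain X Y where XY: "X \<in> C" "(x, a) \<in> X" "Y \<in> C" "(x, b) \<in> Y" by blast
        then obtain Z where Z: "Z \<in> C" "X \<subseteq> Z" "Y \<subseteq> Z" using two by blast
        show "a = b"
          using lgraphD(5)[OF conjunct1[OF CA[OF Z(1)]]] XY Z by blast
      qed
      moreover have "G0 \<subseteq> \<Union>C" using False CA by blast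
      ultimately show ?thesis unfolding A_def by blast
    qed
  qed
  from Zorn_Lemma2[OF this] obtain M where M: "M \<in> A" and Mmax: "\<And>X. X \<in> A \<Longrightarrow> M \<subseteq> X \<Longrightarrow> X = M"
    by blast
  have Ml: "lgraph p M" and G0M: "G0 \<subseteq> M" using M A_def by auto
  have Mne: "M \<noteq> {}" using G0ne G0M by blast
  have dom: "\<exists>a. (x, a) \<in> M" if xV: "x \<in> V" for x
  proof (rule ccontr)
    assume nx: "\<not> ?thesis"
    obtain G' where G': "lgraph p G'" "M \<subseteq> G'" "G' \<noteq> M"
      using lgraph_ext[OF p_add p_sm Ml Mne xV] nx by blast
    have "G' \<in> A" using G' G0M A_def by blast
    then show False using Mmax G' by blast
  qed
  define h where "h x = (THE a. (x, a) \<in> M)" for x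
  have hM: "h x = a" if "(x, a) \<in> M" for x a
    unfolding h_def by (rule the_equality) (use that lgraphD(5)[OF Ml] in blast)+
  have hM': "(x, h x) \<in> M" if "x \<in> V" for x using dom[OF that] hM by blast
  show ?thesis
  proof (intro exI[of _ h] conjI allI impI ballI)
    show "\<And>x a. (x, a) \<in> G0 \<Longrightarrow> h x = a" using hM G0M by blast
    show "\<And>x. x \<in> V \<Longrightarrow> h x \<le> p x" using hM' lgraphD(2)[OF Ml] by blast
    show "h (x + y) = h x + h y" if "x \<in> V" "y \<in> V" for x y
      by (rule hM[OF lgraphD(3)[OF Ml hM'[OF that(1)] hM'[OF that(2)]]])
    show "h (smul r x) = r * h x" if "x \<in> V" for r x
      by (rule hM[OF lgraphD(4)[OF Ml hM'[OF that]]])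
  qed
qed

end

locale hs =
  fixes sc :: "complex \<Rightarrow> 'h::ab_group_add \<Rightarrow> 'h" and ip :: "'h \<Rightarrow> 'h \<Rightarrow> complex"
  assumes H: "hilbert_space sc ip"
begin

lemmas Hc = H[unfolded hilbert_space_def]

lemma sc_add: "sc a (x + y) = sc a x + sc a y" using Hc[THEN conjunct1] by blast
lemma sc_radd: "sc (a + b) x = sc a x + sc b x" using Hc[THEN conjunct2, THEN conjunct1] by blast
lemma sc_sc: "sc a (sc b x) = sc (a * b) x" using Hc[THEN conjunct2, THEN conjunct2, THEN conjunct1] by blast
lemma sc_one[simp]: "sc 1 x = x" using Hc[THEN conjunct2, THEN conjunct2, THEN conjunct2, THEN conjunct1] by blast
lemma ip_add_left: "ip (x + y) z = ip x z + ip y z" using Hc[THEN conjunct2, THEN conjunct2, THEN conjunct2, THEN conjunct2, THEN conjunct1] by blast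
lemma ip_sc_left: "ip (sc a x) y = a * ip x y" using Hc[THEN conjunct2, THEN conjunct2, THEN conjunct2, THEN conjunct2, THEN conjunct2, THEN conjunct1] by blast
lemma ip_sym: "ip y x = cnj (ip x y)" using Hc[THEN conjunct2, THEN conjunct2, THEN conjunct2, THEN conjunct2, THEN conjunct2, THEN conjunct2, THEN conjunct1] by blast
lemma ip_pos: "0 \<le> Re (ip x x)" using Hc[THEN conjunct2, THEN conjunct2, THEN conjunct2, THEN conjunct2, THEN conjunct2, THEN conjunct2, THEN conjunct2, THEN conjunct1] by blast
lemma ip_zero_imp: "ip x x = 0 \<Longrightarrow> x = 0" using Hc[THEN conjunct2, THEN conjunct2, THEN conjunct2, THEN conjunct2, THEN conjunct2, THEN conjunct2, THEN conjunct2, THEN conjunct2, THEN conjunct1] by blast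
lemma complete:
  fixes X :: "nat \<Rightarrow> 'h"
  assumes "\<forall>e>0. \<exists>N. \<forall>m\<ge>N. \<forall>n\<ge>N. hnorm ip (X m - X n) < e"
  shows "\<exists>L. \<forall>e>0. \<exists>N. \<forall>n\<ge>N. hnorm ip (X n - L) < e"
  by (rule mp[OF spec[OF Hc[THEN conjunct2, THEN conjunct2, THEN conjunct2, THEN conjunct2, THEN conjunct2, THEN conjunct2, THEN conjunct2, THEN conjunct2, THEN conjunct2], of X] assms])

lemma sc_zero[simp]: "sc 0 x = 0" using sc_radd[of 0 0 x] by simp
lemma sc_zero_right[simp]: "sc a 0 = 0" using sc_add[of a 0 0] by simp
lemma sc_neg: "sc (- a) x = - sc a x"
  using minus_unique[of "sc a x" "sc (-a) x"] sc_radd[of a "-a" x] by simp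
lemma sc_minus_right: "sc a (- x) = - sc a x"
  using minus_unique[of "sc a x" "sc a (-x)"] sc_add[of a x "-x"] by simp
lemma sc_diff: "sc a (x - y) = sc a x - sc a y"
  using sc_add[of a x "-y"] sc_minus_right by simp
lemma sc_ldiff: "sc (a - b) x = sc a x - sc b x"
  using sc_radd[of a "-b" x] sc_neg by simp

lemma ip_add_right: "ip x (y + z) = ip x y + ip x z"
  by (subst (1 2 3) ip_sym) (simp add: ip_add_left)
lemma ip_sc_right: "ip x (sc a y) = cnj a * ip x y"
  by (subst (1 2) ip_sym) (simp add: ip_sc_left)
lemma ip_zero_left[simp]: "ip 0 y = 0" using ip_add_left[of 0 0 y] by simp
lemma ip_zero_right[simp]: "ip x 0 = 0" using ip_add_right[of x 0 0] by simp
lemma ip_minus_left: "ip (- x) y = - ip x y"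
  using minus_unique[of "ip x y" "ip (-x) y"] ip_add_left[of x "-x" y] by simp
lemma ip_minus_right: "ip x (- y) = - ip x y"
  using minus_unique[of "ip x y" "ip x (-y)"] ip_add_right[of x y "-y"] by simp
lemma ip_diff_left: "ip (x - y) z = ip x z - ip y z"
  using ip_add_left[of x "-y" z] ip_minus_left by simp
lemma ip_diff_right: "ip x (y - z) = ip x y - ip x z"
  using ip_add_right[of x y "-z"] ip_minus_right by simp

lemma ip_self_Im: "Im (ip x x) = 0"
  using ip_sym[of x x] by (metis cnj.sel(2) equation_minus_iff zero_complex.sel(2) complex_eq_iff add_eq_0_iff2 minus_equation_iff neg_equal_zero)
lemma ip_self_real: "ip x x = complex_of_real (Re (ip x x))"
  using ip_self_Im[of x] by (simp add: complex_eq_iff)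
lemma ip_self_zero_iff: "ip x x = 0 \<longleftrightarrow> x = 0" using ip_zero_imp by auto
lemma ip_self_Re_zero_iff: "Re (ip x x) = 0 \<longleftrightarrow> x = 0"
  using ip_self_real[of x] ip_self_zero_iff[of x] by (metis of_real_0 zero_complex.sel(1))

lemma cauchy_schwarz: "(cmod (ip x y))\<^sup>2 \<le> Re (ip x x) * Re (ip y y)"
proof (cases "y = 0")
  case True then show ?thesis by simp
next
  case False
  define r where "r = Re (ip y y)"
  have r: "r > 0" using False ip_pos[of y] ip_self_Re_zero_iff[of y] r_def by linarith
  have yy: "ip y y = complex_of_real r" unfolding r_def by (rule ip_self_real)
  define w where "w = ip x y"
  have yx: "ip y x = cnj w" unfolding w_def by (rule ip_sym)
  define t where "t = w / complex_of_real r"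
  have "ip (x - sc t y) (x - sc t y) = ip x x - cnj t * w - t * cnj w + t * cnj t * complex_of_real r"
    by (simp add: ip_diff_left ip_diff_right ip_sc_left ip_sc_right yy yx w_def algebra_simps)
  also have "\<dots> = ip x x - complex_of_real ((cmod w)\<^sup>2 / r)"
  proof -
    have wc: "w * cnj w = complex_of_real ((cmod w)\<^sup>2)" by (rule complex_norm_square[symmetric])
    have rr: "complex_of_real r \<noteq> 0" using r by simp
    have "cnj t * w = complex_of_real ((cmod w)\<^sup>2 / r)"
      unfolding t_def using wc by (simp add: mult.commute)
    moreover have "t * cnj w = complex_of_real ((cmod w)\<^sup>2 / r)"
      unfolding t_def using wc by simp
    moreover have "t * cnj t * complex_of_real r = complex_of_real ((cmod w)\<^sup>2 / r)"
      unfolding t_def using wc rr by simp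
    ultimately show ?thesis by simp
  qed
  finally have "0 \<le> Re (ip x x) - (cmod w)\<^sup>2 / r" using ip_pos[of "x - sc t y"] by simp
  then show ?thesis using r unfolding w_def r_def[symmetric] by (simp add: field_simps)
qed

end

context hs begin

lemma hn_sq: "(hnorm ip x)\<^sup>2 = Re (ip x x)"
  unfolding hnorm_def by (rule real_sqrt_pow2[OF ip_pos])
lemma hn_nonneg: "0 \<le> hnorm ip x" unfolding hnorm_def using ip_pos[of x] by simp
lemma hn_zero_iff: "hnorm ip x = 0 \<longleftrightarrow> x = 0"
  unfolding hnorm_def using ip_pos[of x] ip_self_Re_zero_iff[of x] by simp
lemma hn_zero[simp]: "hnorm ip 0 = 0" using hn_zero_iff by simp

lemma cs_norm: "cmod (ip x y) \<le> hnorm ip x * hnorm ip y"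
proof -
  have "(cmod (ip x y))\<^sup>2 \<le> (hnorm ip x * hnorm ip y)\<^sup>2"
    using cauchy_schwarz[of x y] by (simp add: power_mult_distrib hn_sq)
  then show ?thesis using hn_nonneg by (meson mult_nonneg_nonneg power2_le_imp_le)
qed

lemma hn_sc: "hnorm ip (sc a x) = cmod a * hnorm ip x"
proof -
  have "ip (sc a x) (sc a x) = (a * cnj a) * ip x x" by (simp add: ip_sc_left ip_sc_right)
  also have "\<dots> = complex_of_real ((cmod a)\<^sup>2 * Re (ip x x))"
    by (subst ip_self_real) (simp add: complex_norm_square[symmetric])
  finally have "Re (ip (sc a x) (sc a x)) = (cmod a)\<^sup>2 * Re (ip x x)" by simp
  then show ?thesis unfolding hnorm_def by (simp add: real_sqrt_mult)
qed

lemma sc_minus_one: "sc (-1) x = - x" using sc_neg[of 1 x] by simp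

lemma hn_minus: "hnorm ip (- x) = hnorm ip x"
  using hn_sc[of "-1" x] sc_minus_one by simp

lemma hn_diff_commute: "hnorm ip (x - y) = hnorm ip (y - x)"
  using hn_minus[of "x - y"] by simp

lemma hn_triangle: "hnorm ip (x + y) \<le> hnorm ip x + hnorm ip y"
proof -
  have "ip (x + y) (x + y) = ip x x + ip y y + (ip x y + cnj (ip x y))"
    by (simp add: ip_add_left ip_add_right) (subst (2) ip_sym, simp)
  then have "Re (ip (x + y) (x + y)) = Re (ip x x) + Re (ip y y) + 2 * Re (ip x y)" by simp
  also have "\<dots> \<le> Re (ip x x) + Re (ip y y) + 2 * (hnorm ip x * hnorm ip y)"
    using cs_norm[of x y] complex_Re_le_cmod[of "ip x y"] by linarith
  also have "\<dots> = (hnorm ip x + hnorm ip y)\<^sup>2" by (simp add: power2_sum hn_sq)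
  finally have "(hnorm ip (x + y))\<^sup>2 \<le> (hnorm ip x + hnorm ip y)\<^sup>2" by (simp add: hn_sq)
  then show ?thesis using hn_nonneg by (meson add_nonneg_nonneg power2_le_imp_le)
qed

lemma hn_triangle_diff: "hnorm ip (x - z) \<le> hnorm ip (x - y) + hnorm ip (y - z)"
  using hn_triangle[of "x - y" "y - z"] by simp

lemma hn_reverse: "hnorm ip x - hnorm ip y \<le> hnorm ip (x - y)"
  using hn_triangle[of "x - y" y] by simp

lemma bop_add: "bounded_op sc ip T \<Longrightarrow> T (x + y) = T x + T y" unfolding bounded_op_def by blast
lemma bop_sc: "bounded_op sc ip T \<Longrightarrow> T (sc a x) = sc a (T x)" unfolding bounded_op_def by blast
lemma bop_zero: "bounded_op sc ip T \<Longrightarrow> T 0 = 0" using bop_sc[of T 0 0] by simp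
lemma bop_minus: "bounded_op sc ip T \<Longrightarrow> T (- x) = - T x"
  using bop_sc[of T "-1" x] by (simp add: sc_minus_one)
lemma bop_diff: "bounded_op sc ip T \<Longrightarrow> T (x - y) = T x - T y"
  using bop_add[of T x "-y"] bop_minus[of T y] by simp

lemma bop_bdd:
  assumes "bounded_op sc ip T"
  shows "bdd_above ((\<lambda>x. hnorm ip (T x)) ` {x. hnorm ip x \<le> 1})"
proof -
  obtain C where C: "\<And>x. hnorm ip (T x) \<le> C * hnorm ip x" using assms unfolding bounded_op_def by blast
  have "hnorm ip (T x) \<le> max C 0" if "hnorm ip x \<le> 1" for x
  proof -
    have "C * hnorm ip x \<le> max C 0 * hnorm ip x" using hn_nonneg by (simp add: mult_right_mono)
    also have "\<dots> \<le> max C 0" using that hn_nonneg[of x] by (simp add: mult_left_le)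
    finally show ?thesis using C[of x] by linarith
  qed
  then show ?thesis unfolding bdd_above_def by blast
qed

lemma opnorm_ge: "bounded_op sc ip T \<Longrightarrow> hnorm ip x \<le> 1 \<Longrightarrow> hnorm ip (T x) \<le> opnorm ip T"
  unfolding opnorm_def by (rule cSup_upper[OF _ bop_bdd]) auto

lemma opnorm_nonneg: "bounded_op sc ip T \<Longrightarrow> 0 \<le> opnorm ip T"
  using opnorm_ge[of T 0] hn_nonneg[of "T 0"] by simp

lemma opnorm_le: "(\<And>x. hnorm ip x \<le> 1 \<Longrightarrow> hnorm ip (T x) \<le> C) \<Longrightarrow> opnorm ip T \<le> C"
  unfolding opnorm_def
proof (rule cSup_least)
  have "0 \<in> {x. hnorm ip x \<le> 1}" by simp
  then show "(\<lambda>x. hnorm ip (T x)) ` {x. hnorm ip x \<le> 1} \<noteq> {}" by blast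
qed auto

lemma opnorm_bound:
  assumes T: "bounded_op sc ip T"
  shows "hnorm ip (T x) \<le> opnorm ip T * hnorm ip x"
proof (cases "x = 0")
  case True then show ?thesis using bop_zero[OF T] by simp
next
  case False
  define n where "n = hnorm ip x"
  have n: "n > 0" using False hn_zero_iff hn_nonneg n_def by (metis less_eq_real_def)
  have c: "cmod (complex_of_real (1/n)) = 1/n" using n by (simp only: norm_of_real) simp
  have "hnorm ip (sc (complex_of_real (1 / n)) x) = 1" using n unfolding hn_sc c by (simp add: n_def)
  then have "hnorm ip (T (sc (complex_of_real (1 / n)) x)) \<le> opnorm ip T" using opnorm_ge[OF T] by simp
  then have "(1 / n) * hnorm ip (T x) \<le> opnorm ip T" unfolding bop_sc[OF T] hn_sc c .
  then show ?thesis using n unfolding n_def[symmetric] by (simp add: field_simps)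
qed

end

context hs begin

lemma parallelogram: "Re (ip (a - b) (a - b)) + Re (ip (a + b) (a + b)) = 2 * Re (ip a a) + 2 * Re (ip b b)"
proof -
  have "ip (a - b) (a - b) + ip (a + b) (a + b) = 2 * ip a a + 2 * ip b b"
    by (simp add: ip_add_left ip_add_right ip_diff_left ip_diff_right)
  then show ?thesis by (metis plus_complex.sel(1) Re_complex_of_real mult_2 plus_complex.sel(1))
qed

lemma hn_lt_from_sq: "0 < e \<Longrightarrow> Re (ip x x) < e\<^sup>2 \<Longrightarrow> hnorm ip x < e"
  using hn_sq[of x] hn_nonneg[of x] by (metis less_eq_real_def power_less_imp_less_base)

lemma riesz:
  fixes f :: "'h \<Rightarrow> complex"
  assumes fadd: "\<And>x y. f (x + y) = f x + f y" and fsc: "\<And>a x. f (sc a x) = a * f x"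
    and fb: "\<And>x. cmod (f x) \<le> C * hnorm ip x"
  shows "\<exists>y. \<forall>x. f x = ip x y"
proof (cases "\<forall>x. f x = 0")
  case True then show ?thesis by (intro exI[of _ 0]) simp
next
  case False
  then obtain u where u: "f u \<noteq> 0" by blast
  have f0: "f 0 = 0" using fsc[of 0 0] by simp
  have fdiff: "f (x - y) = f x - f y" for x y
    using fadd[of x "-y"] fsc[of "-1" y] by (simp add: sc_minus_one)
  define q where "q x = Re (ip x x)" for x
  have q0: "0 \<le> q x" for x using ip_pos q_def by simp
  define u1 where "u1 = sc (1 / f u) u"
  have fu1: "f u1 = 1" using u unfolding u1_def fsc by simp
  define Q where "Q = q ` {x. f x = 1}"
  define d2 where "d2 = Inf Q"
  have Qne: "Q \<noteq> {}" using fu1 Q_def by blast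
  have Qbdd: "bdd_below Q" unfolding bdd_below_def Q_def using q0 by blast
  have dle: "d2 \<le> q x" if "f x = 1" for x
    unfolding d2_def by (rule cInf_lower[OF _ Qbdd]) (use that Q_def in blast)
  have d20: "0 \<le> d2" unfolding d2_def using Qne Q_def q0 by (metis cInf_greatest imageE)
  have "\<forall>n::nat. \<exists>x. f x = 1 \<and> q x < d2 + 1 / real (Suc n)"
  proof
    fix n :: nat
    have "Inf Q < d2 + 1 / real (Suc n)" unfolding d2_def by simp
    from cInf_lessD[OF Qne this] show "\<exists>x. f x = 1 \<and> q x < d2 + 1 / real (Suc n)"
      unfolding Q_def by blast
  qed
  then obtain X where X: "\<And>n. f (X n) = 1" "\<And>n. q (X n) < d2 + 1 / real (Suc n)"
    by metis
  have mid: "4 * d2 \<le> q (X m + X n)" for m n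
  proof -
    define z where "z = sc (1/2) (X m + X n)"
    have fz: "f z = 1" unfolding z_def fsc fadd X by simp
    have "X m + X n = sc 2 z" unfolding z_def sc_sc by simp
    then have "hnorm ip (X m + X n) = 2 * hnorm ip z" by (simp add: hn_sc)
    then have "q (X m + X n) = 4 * q z" unfolding q_def hn_sq[symmetric] by (simp add: power_mult_distrib)
    then show ?thesis using dle[OF fz] by simp
  qed
  have qdiff: "q (X m - X n) \<le> 2 / real (Suc m) + 2 / real (Suc n)" for m n
    using parallelogram[of "X m" "X n"] mid[of m n] X(2)[of m] X(2)[of n] unfolding q_def by simp
  have cauchy: "\<forall>e>0. \<exists>N. \<forall>m\<ge>N. \<forall>n\<ge>N. hnorm ip (X m - X n) < e"
  proof (intro allI impI)
    fix e :: real assume e: "e > 0"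
    obtain N :: nat where N: "4 / e\<^sup>2 < real N" using reals_Archimedean2 by blast
    have N4: "4 / real (Suc N) < e\<^sup>2"
    proof -
      have "4 < e\<^sup>2 * real N" using N e by (simp add: field_simps)
      also have "\<dots> < e\<^sup>2 * real (Suc N)" using e by simp
      finally show ?thesis by (simp add: field_simps)
    qed
    show "\<exists>N. \<forall>m\<ge>N. \<forall>n\<ge>N. hnorm ip (X m - X n) < e"
    proof (intro exI[of _ N] allI impI)
      fix m n assume mn: "N \<le> m" "N \<le> n"
      have "2 / real (Suc m) \<le> 2 / real (Suc N)" using mn by (simp add: frac_le)
      moreover have "2 / real (Suc n) \<le> 2 / real (Suc N)" using mn by (simp add: frac_le)
      ultimately have "q (X m - X n) < e\<^sup>2" using qdiff[of m n] N4 by simp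
      then show "hnorm ip (X m - X n) < e" using hn_lt_from_sq e q_def by simp
    qed
  qed
  from complete[OF cauchy] obtain L where L: "\<And>e. e > 0 \<Longrightarrow> \<exists>N. \<forall>n\<ge>N. hnorm ip (X n - L) < e"
    by blast
  have fL: "f L = 1"
  proof -
    have small: "cmod (f L - 1) \<le> e" if e: "e > 0" for e
    proof -
      obtain N where N: "\<And>n. n \<ge> N \<Longrightarrow> hnorm ip (X n - L) < e / (\<bar>C\<bar> + 1)"
      proof -
        have "e / (\<bar>C\<bar> + 1) > 0" using e by (simp add: add_pos_nonneg)
        from L[OF this] show ?thesis using that by blast
      qed
      have "f (X N - L) = 1 - f L" using fdiff X(1)[of N] by simp
      then have "cmod (f L - 1) = cmod (f (X N - L))" by (simp add: norm_minus_commute)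
      also have "\<dots> \<le> C * hnorm ip (X N - L)" by (rule fb)
      also have "\<dots> \<le> \<bar>C\<bar> * hnorm ip (X N - L)" using hn_nonneg by (simp add: mult_right_mono)
      also have "\<dots> \<le> \<bar>C\<bar> * (e / (\<bar>C\<bar> + 1))" by (rule mult_left_mono) (use N[of N] in auto)
      also have "\<dots> = e * (\<bar>C\<bar> / (\<bar>C\<bar> + 1))" by simp
      also have "\<dots> \<le> e * 1" by (rule mult_left_mono) (use e in auto)
      finally show ?thesis by simp
    qed
    have "cmod (f L - 1) \<le> 0"
      by (rule field_le_epsilon, subst add_0, rule small, assumption)
    then show ?thesis by simp
  qed
  have hL: "hnorm ip L \<le> sqrt d2"
  proof (rule field_le_epsilon)
    fix e :: real assume e: "e > 0"
    have e2: "e / 2 > 0" using e by simp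
    from L[OF e2] obtain N1 where N1: "\<And>n. n \<ge> N1 \<Longrightarrow> hnorm ip (X n - L) < e / 2" by blast
    have pe: "(e/2)\<^sup>2 > 0" using e by simp
    obtain N2 :: nat where N2: "1 / (e/2)\<^sup>2 < real N2" using reals_Archimedean2 by blast
    define n where "n = max N1 N2"
    have h1: "hnorm ip (X n - L) < e / 2" using N1 n_def by simp
    have "1 < real N2 * (e/2)\<^sup>2" using N2 pos_divide_less_eq[OF pe] by blast
    also have "\<dots> \<le> real (Suc n) * (e/2)\<^sup>2" by (rule mult_right_mono) (use pe n_def in auto)
    finally have "1 / real (Suc n) < (e/2)\<^sup>2" by (simp add: pos_divide_less_eq mult.commute)
    then have "q (X n) < d2 + (e/2)\<^sup>2" using X(2)[of n] by simp
    then have "hnorm ip (X n) < sqrt (d2 + (e/2)\<^sup>2)" unfolding hnorm_def q_def by simp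
    also have "\<dots> \<le> sqrt d2 + sqrt ((e/2)\<^sup>2)" by (rule sqrt_add_le_add_sqrt[OF d20]) simp
    also have "sqrt ((e/2)\<^sup>2) = e/2" using e by simp
    finally have h2: "hnorm ip (X n) < sqrt d2 + e / 2" .
    have "hnorm ip L \<le> hnorm ip (X n) + hnorm ip (L - X n)" using hn_triangle[of "X n" "L - X n"] by simp
    also have "hnorm ip (L - X n) = hnorm ip (X n - L)" by (rule hn_diff_commute)
    finally show "hnorm ip L \<le> sqrt d2 + e" using h1 h2 by simp
  qed
  have qL: "q L \<le> q x" if "f x = 1" for x
  proof -
    have "q L = (hnorm ip L)\<^sup>2" unfolding q_def hn_sq ..
    also have "\<dots> \<le> (sqrt d2)\<^sup>2" using hL hn_nonneg by (simp add: power_mono)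
    also have "\<dots> = d2" using d20 by simp
    finally show ?thesis using dle[OF that] by simp
  qed
  have orth: "ip L n = 0" if fn: "f n = 0" for n
  proof -
    define w where "w = ip L n"
    define qn where "qn = q n"
    have qn0: "0 \<le> qn" using q0 qn_def by simp
    define s where "s = 1 / (qn + 1)"
    have s: "s > 0" using qn0 s_def by simp
    define t where "t = - (complex_of_real s * w)"
    have "f (L + sc t n) = 1" using fL fn by (simp add: fadd fsc)
    then have ge: "q L \<le> q (L + sc t n)" using qL by simp
    have nL: "ip n L = cnj w" unfolding w_def by (rule ip_sym)
    have nn: "ip n n = complex_of_real qn" unfolding qn_def q_def by (rule ip_self_real)
    have "ip (L + sc t n) (L + sc t n) = ip L L + (cnj t * w + t * cnj w + t * cnj t * complex_of_real qn)"
      by (simp add: ip_add_left ip_add_right ip_sc_left ip_sc_right nL nn w_def algebra_simps)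
    then have "q (L + sc t n) = q L + Re (cnj t * w + t * cnj w + t * cnj t * complex_of_real qn)"
      unfolding q_def by simp
    also have "Re (cnj t * w + t * cnj w + t * cnj t * complex_of_real qn) = (cmod w)\<^sup>2 * (s * s * qn - 2 * s)"
    proof -
      have cw: "cmod w * cmod w = Re w * Re w + Im w * Im w" using cmod_power2[of w] by (simp add: power2_eq_square)
      show ?thesis unfolding t_def by (simp add: cw power2_eq_square algebra_simps)
    qed
    finally have A: "0 \<le> (cmod w)\<^sup>2 * (s * s * qn - 2 * s)" using ge by simp
    have B: "s * s * qn - 2 * s < 0"
    proof -
      have "s * qn < 1" using qn0 unfolding s_def by (simp add: field_simps)
      then have "s * (s * qn) < s * 2" using s by simp
      then show ?thesis by (simp add: algebra_simps)
    qed
    have "(cmod w)\<^sup>2 \<le> 0"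
    proof (rule ccontr)
      assume "\<not> (cmod w)\<^sup>2 \<le> 0"
      then have "(cmod w)\<^sup>2 > 0" by simp
      then have "(cmod w)\<^sup>2 * (s * s * qn - 2 * s) < 0" using B by (rule mult_pos_neg)
      then show False using A by simp
    qed
    then show ?thesis unfolding w_def by simp
  qed
  have L0: "L \<noteq> 0" using fL f0 by auto
  define qL where "qL = q L"
  have qLpos: "qL > 0" using L0 ip_self_Re_zero_iff[of L] q0[of L] unfolding qL_def q_def by linarith
  have LL: "ip L L = complex_of_real qL" unfolding qL_def q_def by (rule ip_self_real)
  have rep: "ip x L = f x * complex_of_real qL" for x
  proof -
    have "f (x - sc (f x) L) = 0" using fL by (simp add: fdiff fsc)
    from orth[OF this] have "ip (x - sc (f x) L) L = 0" using ip_sym[of L "x - sc (f x) L"] by simp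
    then show ?thesis by (simp add: ip_diff_left ip_sc_left LL)
  qed
  show ?thesis
  proof (intro exI[of _ "sc (complex_of_real (1 / qL)) L"] allI)
    fix x
    show "f x = ip x (sc (complex_of_real (1 / qL)) L)"
      using qLpos by (simp add: ip_sc_right rep)
  qed
qed

end

context hs begin

lemma adj_exists:
  assumes T: "bounded_op sc ip T"
  shows "\<exists>A. \<forall>x y. ip (T x) y = ip x (A y)"
proof -
  have "\<forall>y. \<exists>z. \<forall>x. ip (T x) y = ip x z"
  proof
    fix y
    show "\<exists>z. \<forall>x. ip (T x) y = ip x z"
    proof (rule riesz[where C = "opnorm ip T * hnorm ip y"])
      show "\<And>x1 x2. ip (T (x1 + x2)) y = ip (T x1) y + ip (T x2) y"
        by (simp add: bop_add[OF T] ip_add_left)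
      show "\<And>a x. ip (T (sc a x)) y = a * ip (T x) y"
        by (simp add: bop_sc[OF T] ip_sc_left)
      fix x
      have "cmod (ip (T x) y) \<le> hnorm ip (T x) * hnorm ip y" by (rule cs_norm)
      also have "\<dots> \<le> (opnorm ip T * hnorm ip x) * hnorm ip y"
        by (rule mult_right_mono[OF opnorm_bound[OF T] hn_nonneg])
      finally show "cmod (ip (T x) y) \<le> opnorm ip T * hnorm ip y * hnorm ip x"
        by (simp add: algebra_simps)
    qed
  qed
  from choice[OF this] obtain A where "\<forall>y x. ip (T x) y = ip x (A y)" by blast
  then show ?thesis by blast
qed

lemma adj_unique:
  assumes "\<forall>x y. ip (T x) y = ip x (A y)" "\<forall>x y. ip (T x) y = ip x (B y)"
  shows "A = B"
proof
  fix y
  have "ip x (A y - B y) = 0" for x using assms by (simp add: ip_diff_right)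
  from this[of "A y - B y"] show "A y = B y" using ip_self_zero_iff by simp
qed

lemma adj_eq:
  assumes "\<forall>x y. ip (T x) y = ip x (A y)"
  shows "adj ip T = A"
  unfolding adj_def by (rule the_equality) (use adj_unique assms in blast)+

lemma adj_prop:
  assumes T: "bounded_op sc ip T"
  shows "ip (T x) y = ip x (adj ip T y)"
proof -
  obtain A where A: "\<forall>x y. ip (T x) y = ip x (A y)" using adj_exists[OF T] by blast
  show ?thesis using A adj_eq[OF A] by simp
qed

lemma adj_norm:
  assumes T: "bounded_op sc ip T" and A: "\<forall>x y. ip (T x) y = ip x (A y)"
  shows "opnorm ip A \<le> opnorm ip T"
proof (rule opnorm_le)
  fix y assume y: "hnorm ip y \<le> 1"
  have "(hnorm ip (A y))\<^sup>2 = Re (ip (A y) (A y))" by (rule hn_sq)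
  also have "\<dots> = Re (ip (T (A y)) y)" using A by simp
  also have "\<dots> \<le> cmod (ip (T (A y)) y)" by (rule complex_Re_le_cmod)
  also have "\<dots> \<le> hnorm ip (T (A y)) * hnorm ip y" by (rule cs_norm)
  also have "\<dots> \<le> hnorm ip (T (A y)) * 1" by (rule mult_left_mono[OF y hn_nonneg])
  also have "\<dots> \<le> opnorm ip T * hnorm ip (A y)" using opnorm_bound[OF T, of "A y"] by simp
  finally have *: "hnorm ip (A y) * hnorm ip (A y) \<le> opnorm ip T * hnorm ip (A y)"
    by (simp add: power2_eq_square)
  show "hnorm ip (A y) \<le> opnorm ip T"
  proof (cases "hnorm ip (A y) = 0")
    case True then show ?thesis using opnorm_nonneg[OF T] by simp
  next
    case False
    then have "hnorm ip (A y) > 0" using hn_nonneg[of "A y"] by simp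
    then show ?thesis using mult_right_le_imp_le[OF *] by simp
  qed
qed

lemma polarization_sym:
  assumes add: "\<And>x y. T (x + y) = T x + T y" and scl: "\<And>a x. T (sc a x) = sc a (T x)"
    and im: "\<And>x. Im (ip (T x) x) = 0"
  shows "ip (T x) y = ip x (T y)"
proof -
  define b where "b = ip (T x) y"
  define c where "c = ip (T y) x"
  have e1: "ip (T (x + y)) (x + y) = ip (T x) x + ip (T y) y + (b + c)"
    unfolding b_def c_def by (simp add: add ip_add_left ip_add_right)
  have e2: "ip (T (x + sc \<i> y)) (x + sc \<i> y) = ip (T x) x + \<i> * c + cnj \<i> * (b + \<i> * ip (T y) y)"
    unfolding b_def c_def by (simp only: add scl ip_add_left ip_add_right ip_sc_left ip_sc_right)
  have "Im (b + c) = 0" using e1 im[of "x + y"] im[of x] im[of y] by simp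
  moreover have "Re c - Re b = 0" using e2 im[of "x + sc \<i> y"] im[of x] im[of y] by simp
  ultimately have "b = cnj c" by (simp add: complex_eq_iff)
  moreover have "ip x (T y) = cnj c" unfolding c_def by (rule ip_sym)
  ultimately show ?thesis unfolding b_def by simp
qed

lemma pos_adj:
  assumes T: "bounded_op sc ip T" and P: "pos_op ip T"
  shows "adj ip T = T"
proof (rule adj_eq, intro allI)
  fix x y
  show "ip (T x) y = ip x (T y)"
  proof (rule polarization_sym[OF bop_add[OF T] bop_sc[OF T]])
    fix z show "Im (ip (T z) z) = 0" using P unfolding pos_op_def by simp
  qed
qed

end

context hs begin

lemma opnorm_add:
  assumes T: "bounded_op sc ip T" and U: "bounded_op sc ip U"
  shows "opnorm ip (\<lambda>x. T x + U x) \<le> opnorm ip T + opnorm ip U"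
proof (rule opnorm_le)
  fix x assume x: "hnorm ip x \<le> 1"
  have "hnorm ip (T x + U x) \<le> hnorm ip (T x) + hnorm ip (U x)" by (rule hn_triangle)
  also have "\<dots> \<le> opnorm ip T * hnorm ip x + opnorm ip U * hnorm ip x"
    using opnorm_bound[OF T, of x] opnorm_bound[OF U, of x] by simp
  also have "\<dots> = (opnorm ip T + opnorm ip U) * hnorm ip x" by (simp add: algebra_simps)
  also have "\<dots> \<le> (opnorm ip T + opnorm ip U) * 1"
    by (rule mult_left_mono[OF x]) (simp add: opnorm_nonneg[OF T] opnorm_nonneg[OF U])
  finally show "hnorm ip (T x + U x) \<le> opnorm ip T + opnorm ip U" by simp
qed

lemma opnorm_scale:
  assumes T: "bounded_op sc ip T"
  shows "opnorm ip (\<lambda>x. sc c (T x)) \<le> cmod c * opnorm ip T"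
proof (rule opnorm_le)
  fix x assume x: "hnorm ip x \<le> 1"
  have "hnorm ip (sc c (T x)) = cmod c * hnorm ip (T x)" by (rule hn_sc)
  also have "\<dots> \<le> cmod c * (opnorm ip T * hnorm ip x)"
    by (rule mult_left_mono[OF opnorm_bound[OF T]]) simp
  also have "\<dots> \<le> cmod c * (opnorm ip T * 1)"
    by (rule mult_left_mono[OF mult_left_mono[OF x]]) (simp_all add: opnorm_nonneg[OF T])
  finally show "hnorm ip (sc c (T x)) \<le> cmod c * opnorm ip T" by simp
qed

lemma opnorm_scale_eq:
  assumes T: "bounded_op sc ip T" and cT: "bounded_op sc ip (\<lambda>x. sc c (T x))" and c: "c \<noteq> 0"
  shows "opnorm ip (\<lambda>x. sc c (T x)) = cmod c * opnorm ip T"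
proof (rule antisym)
  show "opnorm ip (\<lambda>x. sc c (T x)) \<le> cmod c * opnorm ip T" by (rule opnorm_scale[OF T])
  have "(\<lambda>x. sc (1 / c) (sc c (T x))) = T" using c by (simp add: sc_sc)
  then have "opnorm ip T \<le> cmod (1 / c) * opnorm ip (\<lambda>x. sc c (T x))"
    using opnorm_scale[OF cT, of "1 / c"] by simp
  then have "cmod c * opnorm ip T \<le> cmod c * (cmod (1 / c) * opnorm ip (\<lambda>x. sc c (T x)))"
    by (rule mult_left_mono) simp
  also have "\<dots> = opnorm ip (\<lambda>x. sc c (T x))" using c by (simp add: norm_divide)
  finally show "cmod c * opnorm ip T \<le> opnorm ip (\<lambda>x. sc c (T x))" .
qed

lemma opnorm_zero: "opnorm ip (\<lambda>x. 0) = 0"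
proof (rule antisym)
  show "opnorm ip (\<lambda>x. 0) \<le> 0" by (rule opnorm_le) simp
  have "bounded_op sc ip (\<lambda>x. 0)" unfolding bounded_op_def by (auto intro: exI[of _ 0])
  then show "0 \<le> opnorm ip (\<lambda>x. 0)" by (rule opnorm_nonneg)
qed

end

locale osys = hs +
  fixes S :: "('h::ab_group_add \<Rightarrow> 'h) set"
  assumes os: "operator_system sc ip S"
begin

lemma Sb: "T \<in> S \<Longrightarrow> bounded_op sc ip T" using os unfolding operator_system_def by blast
lemma S0: "(\<lambda>x. 0) \<in> S" using os unfolding operator_system_def by blast
lemma Sadd: "T \<in> S \<Longrightarrow> U \<in> S \<Longrightarrow> (\<lambda>x. T x + U x) \<in> S" using os unfolding operator_system_def by blast
lemma Ssc: "T \<in> S \<Longrightarrow> (\<lambda>x. sc a (T x)) \<in> S" using os unfolding operator_system_def by blast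
lemma Sadj: "T \<in> S \<Longrightarrow> adj ip T \<in> S" using os unfolding operator_system_def by blast
lemma Sminus: "T \<in> S \<Longrightarrow> (\<lambda>x. - T x) \<in> S" using Ssc[of T "-1"] by (simp add: sc_minus_one)
lemma Sdiff: "T \<in> S \<Longrightarrow> U \<in> S \<Longrightarrow> (\<lambda>x. T x - U x) \<in> S"
  using Sadd[OF _ Sminus, of T U] by simp

lemma Kout: "\<phi> \<in> quasistates sc ip S \<Longrightarrow> T \<notin> S \<Longrightarrow> \<phi> T = 0"
  unfolding quasistates_def by blast
lemma Kadd: "\<phi> \<in> quasistates sc ip S \<Longrightarrow> T \<in> S \<Longrightarrow> U \<in> S \<Longrightarrow> \<phi> (\<lambda>x. T x + U x) = \<phi> T + \<phi> U"
  unfolding quasistates_def by blast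
lemma Ksc: "\<phi> \<in> quasistates sc ip S \<Longrightarrow> T \<in> S \<Longrightarrow> \<phi> (\<lambda>x. sc a (T x)) = a * \<phi> T"
  unfolding quasistates_def by blast
lemma Kbound: "\<phi> \<in> quasistates sc ip S \<Longrightarrow> T \<in> S \<Longrightarrow> cmod (\<phi> T) \<le> opnorm ip T"
  unfolding quasistates_def by blast
lemma Kdiff:
  assumes K: "\<phi> \<in> quasistates sc ip S" and T: "T \<in> S" and U: "U \<in> S"
  shows "\<phi> (\<lambda>x. T x - U x) = \<phi> T - \<phi> U"
proof -
  have "(\<lambda>x. T x - U x) = (\<lambda>x. T x + (\<lambda>x. sc (-1) (U x)) x)" by (simp add: sc_minus_one)
  then have "\<phi> (\<lambda>x. T x - U x) = \<phi> T + \<phi> (\<lambda>x. sc (-1) (U x))"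
    using Kadd[OF K T Ssc[OF U]] by simp
  also have "\<phi> (\<lambda>x. sc (-1) (U x)) = - \<phi> U" using Ksc[OF K U, of "-1"] by simp
  finally show ?thesis by simp
qed

lemma forward:
  assumes apg: "approx_pos_generated ip S"
  shows "separates_points (pos_cone ip S) (quasistates sc ip S)"
  unfolding separates_points_def
proof (intro ballI impI)
  fix \<phi> \<psi> assume \<phi>: "\<phi> \<in> quasistates sc ip S" and \<psi>: "\<psi> \<in> quasistates sc ip S" and ne: "\<phi> \<noteq> \<psi>"
  show "\<exists>p\<in>pos_cone ip S. \<phi> p \<noteq> \<psi> p"
  proof (rule ccontr)
    assume "\<not> ?thesis"
    then have agree: "\<And>p. p \<in> pos_cone ip S \<Longrightarrow> \<phi> p = \<psi> p" by blast
    have sa: "\<phi> A = \<psi> A" if A: "A \<in> sa_part ip S" for A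
    proof -
      have AS: "A \<in> S" using A unfolding sa_part_def by blast
      have small: "cmod (\<phi> A - \<psi> A) \<le> 0 + e" if e: "e > 0" for e
      proof -
        have "e / 2 > 0" using e by simp
        then obtain p q where p: "p \<in> pos_cone ip S" and q: "q \<in> pos_cone ip S"
          and d: "opnorm ip (\<lambda>x. A x - (p x - q x)) < e / 2"
          using apg A unfolding approx_pos_generated_def by blast
        have pS: "p \<in> S" and qS: "q \<in> S" using p q unfolding pos_cone_def by auto
        have pq: "(\<lambda>x. p x - q x) \<in> S" by (rule Sdiff[OF pS qS])
        have D: "(\<lambda>x. A x - (p x - q x)) \<in> S" using Sdiff[OF AS pq] by simp
        have "\<phi> (\<lambda>x. A x - (p x - q x)) = \<phi> A - (\<phi> p - \<phi> q)"
          using Kdiff[OF \<phi> AS pq] Kdiff[OF \<phi> pS qS] by simp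
        moreover have "\<psi> (\<lambda>x. A x - (p x - q x)) = \<psi> A - (\<psi> p - \<psi> q)"
          using Kdiff[OF \<psi> AS pq] Kdiff[OF \<psi> pS qS] by simp
        ultimately have "\<phi> A - \<psi> A = \<phi> (\<lambda>x. A x - (p x - q x)) - \<psi> (\<lambda>x. A x - (p x - q x))"
          using agree[OF p] agree[OF q] by simp
        then have "cmod (\<phi> A - \<psi> A) \<le> cmod (\<phi> (\<lambda>x. A x - (p x - q x))) + cmod (\<psi> (\<lambda>x. A x - (p x - q x)))"
          by (simp add: norm_triangle_ineq4)
        also have "\<dots> \<le> opnorm ip (\<lambda>x. A x - (p x - q x)) + opnorm ip (\<lambda>x. A x - (p x - q x))"
          using Kbound[OF \<phi> D] Kbound[OF \<psi> D] by simp
        finally show ?thesis using d by simp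
      qed
      have "cmod (\<phi> A - \<psi> A) \<le> 0" by (rule field_le_epsilon, rule small, assumption)
      then show ?thesis by simp
    qed
    have "\<phi> T = \<psi> T" for T
    proof (cases "T \<in> S")
      case False then show ?thesis using Kout[OF \<phi>] Kout[OF \<psi>] by simp
    next
      case True
      define Ts where "Ts = adj ip T"
      have TsS: "Ts \<in> S" unfolding Ts_def by (rule Sadj[OF True])
      have Tp: "ip (T x) y = ip x (Ts y)" for x y unfolding Ts_def by (rule adj_prop[OF Sb[OF True]])
      have Tsp: "ip (Ts x) y = ip x (T y)" for x y
      proof -
        have "ip (Ts x) y = cnj (ip y (Ts x))" by (rule ip_sym)
        also have "ip y (Ts x) = ip (T y) x" by (rule Tp[symmetric])
        also have "cnj (ip (T y) x) = ip x (T y)" by (rule ip_sym[symmetric])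
        finally show ?thesis .
      qed
      define A where "A = (\<lambda>x. sc (1/2) (T x + Ts x))"
      define B where "B = (\<lambda>x. sc (- \<i> / 2) (T x - Ts x))"
      have AS: "A \<in> S" unfolding A_def by (rule Ssc[OF Sadd[OF True TsS]])
      have BS: "B \<in> S" unfolding B_def by (rule Ssc[OF Sdiff[OF True TsS]])
      have Asa: "A \<in> sa_part ip S" unfolding sa_part_def
      proof (intro CollectI conjI AS adj_eq allI)
        fix x y show "ip (A x) y = ip x (A y)"
          unfolding A_def by (simp add: ip_sc_left ip_sc_right ip_add_left ip_add_right Tp Tsp)
      qed
      have Bsa: "B \<in> sa_part ip S" unfolding sa_part_def
      proof (intro CollectI conjI BS adj_eq allI)
        fix x y show "ip (B x) y = ip x (B y)"
          unfolding B_def by (simp add: ip_sc_left ip_sc_right ip_diff_left ip_diff_right Tp Tsp algebra_simps)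
      qed
      have TAB: "T = (\<lambda>x. A x + (\<lambda>x. sc \<i> (B x)) x)"
      proof
        fix x
        have "sc \<i> (B x) = sc (1/2) (T x - Ts x)" unfolding B_def sc_sc by simp
        then have "A x + sc \<i> (B x) = (sc (1/2) (T x) + sc (1/2) (T x)) + (sc (1/2) (Ts x) - sc (1/2) (Ts x))"
          unfolding A_def by (simp add: sc_add sc_diff algebra_simps)
        also have "\<dots> = T x" using sc_radd[of "1/2" "1/2" "T x"] by simp
        finally show "T x = A x + (\<lambda>x. sc \<i> (B x)) x" by simp
      qed
      have "\<phi> T = \<phi> A + \<i> * \<phi> B" by (subst TAB, simp add: Kadd[OF \<phi> AS Ssc[OF BS]] Ksc[OF \<phi> BS])
      also have "\<dots> = \<psi> A + \<i> * \<psi> B" using sa[OF Asa] sa[OF Bsa] by simp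
      also have "\<dots> = \<psi> T" by (subst TAB, simp add: Kadd[OF \<psi> AS Ssc[OF BS]] Ksc[OF \<psi> BS])
      finally show ?thesis .
    qed
    then show False using ne by blast
  qed
qed

end

context osys begin

lemma zero_K: "(\<lambda>_. 0) \<in> quasistates sc ip S"
  unfolding quasistates_def using opnorm_nonneg Sb by auto

lemma pos_sym: "p \<in> pos_cone ip S \<Longrightarrow> ip (p x) y = ip x (p y)"
  unfolding pos_cone_def
  by (rule polarization_sym[OF bop_add[OF Sb] bop_sc[OF Sb]]) (auto simp: pos_op_def)

lemma pos_add: "p \<in> pos_cone ip S \<Longrightarrow> q \<in> pos_cone ip S \<Longrightarrow> (\<lambda>x. p x + q x) \<in> pos_cone ip S"
  unfolding pos_cone_def pos_op_def by (auto simp: Sadd ip_add_left)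

lemma pos_smul: "p \<in> pos_cone ip S \<Longrightarrow> r \<ge> 0 \<Longrightarrow> (\<lambda>x. sc (complex_of_real r) (p x)) \<in> pos_cone ip S"
  unfolding pos_cone_def pos_op_def by (auto simp: Ssc ip_sc_left)

lemma pos_zero: "(\<lambda>x. 0) \<in> pos_cone ip S"
  unfolding pos_cone_def pos_op_def using S0 by simp

end

lemma ab_aux: fixes a :: "'a::ab_group_add" shows "a + b = c + d \<Longrightarrow> b - d = c - a"
  by (metis add_diff_cancel_left' add_diff_eq diff_diff_eq2 diff_add_cancel add.commute)

context osys begin

lemma reverse:
  assumes sep: "separates_points (pos_cone ip S) (quasistates sc ip S)"
  shows "approx_pos_generated ip S"
proof (rule ccontr)
  assume "\<not> approx_pos_generated ip S"
  then obtain T0 e where T0: "T0 \<in> sa_part ip S" and e: "e > 0"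
    and far: "\<And>p q. p \<in> pos_cone ip S \<Longrightarrow> q \<in> pos_cone ip S \<Longrightarrow> e \<le> opnorm ip (\<lambda>x. T0 x - (p x - q x))"
    unfolding approx_pos_generated_def by (auto simp: not_less)
  have T0S: "T0 \<in> S" using T0 sa_part_def by blast
  have T0sym: "ip (T0 x) y = ip x (T0 y)" for x y
    using adj_prop[OF Sb[OF T0S], of x y] T0 unfolding sa_part_def by simp
  define P where "P = pos_cone ip S"
  define smul :: "real \<Rightarrow> ('h \<Rightarrow> 'h) \<Rightarrow> ('h \<Rightarrow> 'h)" where "smul r T = (\<lambda>x. sc (complex_of_real r) (T x))" for r T
  define ci :: "('h \<Rightarrow> 'h) \<Rightarrow> ('h \<Rightarrow> 'h)" where "ci T = (\<lambda>x. sc \<i> (T x))" for T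
  have S0': "(0 :: 'h \<Rightarrow> 'h) \<in> S" using S0 by (simp add: zero_fun_def)
  have Sadd': "T + U \<in> S" if "T \<in> S" "U \<in> S" for T U using Sadd[OF that] by (simp add: plus_fun_def)
  have Sdiff': "T - U \<in> S" if "T \<in> S" "U \<in> S" for T U using Sdiff[OF that] by (simp add: fun_diff_def)
  have Ssm: "smul r T \<in> S" if "T \<in> S" for r T unfolding smul_def by (rule Ssc[OF that])
  have Sci: "ci T \<in> S" if "T \<in> S" for T unfolding ci_def by (rule Ssc[OF that])
  interpret R: rvs S smul
  proof
    show "0 \<in> S" by (rule S0')
    show "\<And>x y. x \<in> S \<Longrightarrow> y \<in> S \<Longrightarrow> x + y \<in> S" by (rule Sadd')
    show "\<And>r x. x \<in> S \<Longrightarrow> smul r x \<in> S" by (rule Ssm)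
    show "\<And>a x y. smul a (x + y) = smul a x + smul a y" by (simp add: smul_def fun_eq_iff sc_add)
    show "\<And>a b x. smul (a + b) x = smul a x + smul b x" by (simp add: smul_def fun_eq_iff sc_radd)
    show "\<And>a b x. smul a (smul b x) = smul (a * b) x" by (simp add: smul_def fun_eq_iff sc_sc)
    show "\<And>x. smul 1 x = x" by (simp add: smul_def fun_eq_iff)
  qed
  have PS: "p \<in> S" if "p \<in> P" for p using that unfolding P_def pos_cone_def by blast
  have P0: "0 \<in> P" unfolding P_def using pos_zero by (simp add: zero_fun_def)
  have Padd: "p + q \<in> P" if "p \<in> P" "q \<in> P" for p q
    using pos_add[of p q] that unfolding P_def by (simp add: plus_fun_def)
  have Psm: "smul r p \<in> P" if "p \<in> P" "r \<ge> 0" for p r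
    using pos_smul[of p r] that unfolding P_def smul_def by simp
  have Psym: "ip (p x) y = ip x (p y)" if "p \<in> P" for p x y
    using pos_sym that unfolding P_def by blast
  define D where "D = {p - q | p q. p \<in> P \<and> q \<in> P}"
  have DI: "p - q \<in> D" if "p \<in> P" "q \<in> P" for p q using that unfolding D_def by blast
  have DS: "d \<in> S" if "d \<in> D" for d using that PS Sdiff' unfolding D_def by blast
  have D0: "0 \<in> D" using DI[OF P0 P0] by simp
  have Dadd: "d1 + d2 \<in> D" if asm: "d1 \<in> D" "d2 \<in> D" for d1 d2
  proof -
    obtain p q p' q' where "d1 = p - q" "d2 = p' - q'" "p \<in> P" "q \<in> P" "p' \<in> P" "q' \<in> P"
      using asm unfolding D_def by blast
    moreover have "(p - q) + (p' - q') = (p + p') - (q + q')" by (simp add: algebra_simps)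
    ultimately show ?thesis using DI Padd by metis
  qed
  have Dsm: "smul r d \<in> D" if asm: "d \<in> D" for r d
  proof -
    obtain p q where pq: "d = p - q" "p \<in> P" "q \<in> P" using asm unfolding D_def by blast
    show ?thesis
    proof (cases "r \<ge> 0")
      case True
      have "smul r d = smul r p - smul r q" using pq by (simp add: R.sm_diff)
      then show ?thesis using DI Psm pq True by metis
    next
      case False
      have neg: "smul r x = - smul (- r) x" for x using R.sm_neg[of "- r" x] by simp
      have "smul r d = smul (- r) q - smul (- r) p" using pq by (simp add: neg R.sm_diff)
      then show ?thesis using DI Psm pq False by (metis neg_0_le_iff_le less_eq_real_def not_le)
    qed
  qed
  have Dsym: "ip (d x) y = ip x (d y)" if asm: "d \<in> D" for d x y
  proof -
    obtain p q where pq: "d = p - q" "p \<in> P" "q \<in> P" using asm unfolding D_def by blast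
    show ?thesis using pq by (simp add: ip_diff_left ip_diff_right Psym)
  qed
  define Ms where "Ms = {d1 + ci d2 | d1 d2. d1 \<in> D \<and> d2 \<in> D}"
  have MI: "d1 + ci d2 \<in> Ms" if "d1 \<in> D" "d2 \<in> D" for d1 d2 using that unfolding Ms_def by blast
  have MS: "m \<in> S" if "m \<in> Ms" for m using that DS Sci Sadd' unfolding Ms_def by blast
  have ci_add: "ci (a + b) = ci a + ci b" for a b by (simp add: ci_def fun_eq_iff sc_add)
  have ci_smul: "ci (smul r a) = smul r (ci a)" for r a by (simp add: ci_def smul_def fun_eq_iff sc_sc mult.commute)
  have ci0: "ci 0 = 0" by (simp add: ci_def fun_eq_iff)
  have M0: "0 \<in> Ms" using MI[OF D0 D0] ci0 by simp
  have Madd: "m1 + m2 \<in> Ms" if asm: "m1 \<in> Ms" "m2 \<in> Ms" for m1 m2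
  proof -
    obtain a b a' b' where "m1 = a + ci b" "m2 = a' + ci b'" "a \<in> D" "b \<in> D" "a' \<in> D" "b' \<in> D"
      using asm unfolding Ms_def by blast
    moreover have "(a + ci b) + (a' + ci b') = (a + a') + ci (b + b')" by (simp add: ci_add algebra_simps)
    ultimately show ?thesis using MI Dadd by metis
  qed
  have Msm: "smul r m \<in> Ms" if asm: "m \<in> Ms" for r m
  proof -
    obtain a b where ab: "m = a + ci b" "a \<in> D" "b \<in> D" using asm unfolding Ms_def by blast
    have "smul r m = smul r a + ci (smul r b)" using ab by (simp add: R.sm_add ci_smul)
    then show ?thesis using MI Dsm ab by metis
  qed
  have Mdiff: "m1 - m2 \<in> Ms" if "m1 \<in> Ms" "m2 \<in> Ms" for m1 m2
  proof -
    have "m1 - m2 = m1 + smul (-1) m2" by (simp add: R.sm_neg R.sm_one)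
    then show ?thesis using Madd Msm that by metis
  qed
  have opn0: "opnorm ip (0 :: 'h \<Rightarrow> 'h) = 0" using opnorm_zero by (simp add: zero_fun_def)
  have KEY: "e \<le> opnorm ip (T0 - m)" if asm: "m \<in> Ms" for m
  proof -
    obtain d1 d2 where m: "m = d1 + ci d2" "d1 \<in> D" "d2 \<in> D" using asm unfolding Ms_def by blast
    obtain p1 q1 where d1: "d1 = p1 - q1" "p1 \<in> P" "q1 \<in> P" using m(2) unfolding D_def by blast
    define X where "X = T0 - d1 - ci d2"
    define Y where "Y = T0 - d1 + ci d2"
    have XS: "X \<in> S" unfolding X_def using T0S DS m Sci Sdiff' by metis
    have YS: "Y \<in> S" unfolding Y_def using T0S DS m Sci Sdiff' Sadd' by metis
    have XY: "\<forall>x y. ip (X x) y = ip x (Y y)"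
      unfolding X_def Y_def ci_def
      by (simp add: ip_diff_left ip_diff_right ip_add_right ip_sc_left ip_sc_right T0sym Dsym[OF m(2)] Dsym[OF m(3)])
    have oY: "opnorm ip Y \<le> opnorm ip X" by (rule adj_norm[OF Sb[OF XS] XY])
    have half: "(\<lambda>x. T0 x - (p1 x - q1 x)) = (\<lambda>x. sc (1/2) (X x + Y x))"
    proof
      fix x
      have "X x + Y x = (T0 x - d1 x) + (T0 x - d1 x)" unfolding X_def Y_def by (simp add: algebra_simps)
      then have "sc (1/2) (X x + Y x) = sc (1/2 + 1/2) (T0 x - d1 x)" by (simp only: sc_add sc_radd)
      then show "T0 x - (p1 x - q1 x) = sc (1/2) (X x + Y x)" using d1 by simp
    qed
    have XYS: "(\<lambda>x. X x + Y x) \<in> S" by (rule Sadd[OF XS YS])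
    have "e \<le> opnorm ip (\<lambda>x. T0 x - (p1 x - q1 x))" by (rule far[OF d1(2,3)[unfolded P_def]])
    also have "\<dots> \<le> cmod (1/2) * opnorm ip (\<lambda>x. X x + Y x)"
      unfolding half by (rule opnorm_scale[OF Sb[OF XYS]])
    also have "\<dots> \<le> (1/2) * (opnorm ip X + opnorm ip Y)"
      using opnorm_add[OF Sb[OF XS] Sb[OF YS]] by simp
    also have "\<dots> \<le> opnorm ip X" using oY by simp
    also have "X = T0 - m" unfolding X_def m(1) by (simp add: algebra_simps)
    finally show ?thesis .
  qed
  have p_add: "opnorm ip (x + y) \<le> opnorm ip x + opnorm ip y" if "x \<in> S" "y \<in> S" for x y
    using opnorm_add[OF Sb[OF that(1)] Sb[OF that(2)]] by (simp add: plus_fun_def)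
  have p_sm: "opnorm ip (smul r x) = r * opnorm ip x" if "r > 0" "x \<in> S" for r x
  proof -
    have "opnorm ip (smul r x) = cmod (complex_of_real r) * opnorm ip x"
      unfolding smul_def
      by (rule opnorm_scale_eq[OF Sb[OF that(2)] Sb[OF Ssc[OF that(2)]]]) (use that in simp)
    then show ?thesis using that by simp
  qed
  define G0 where "G0 = {(m + smul t T0, t * e) | m t. m \<in> Ms}"
  have G0I: "(m + smul t T0, t * e) \<in> G0" if "m \<in> Ms" for m t using that unfolding G0_def by blast
  have G0E: "\<exists>m t. x = m + smul t T0 \<and> a = t * e \<and> m \<in> Ms" if "(x, a) \<in> G0" for x a
    using that unfolding G0_def by blast
  have lg: "R.lgraph (opnorm ip) G0"
    unfolding R.lgraph_def
  proof (intro conjI allI impI)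
    fix x a assume "(x, a) \<in> G0"
    then obtain m t where xa: "x = m + smul t T0" "a = t * e" "m \<in> Ms" using G0E by blast
    show xS: "x \<in> S" using xa MS Sadd' Ssm T0S by metis
    show "a \<le> opnorm ip x"
    proof (cases "t > 0")
      case False
      then have "a \<le> 0" using xa e by (simp add: mult_nonpos_nonneg)
      also have "0 \<le> opnorm ip x" by (rule opnorm_nonneg[OF Sb[OF xS]])
      finally show ?thesis .
    next
      case True
      define m' where "m' = smul (- 1 / t) m"
      have m': "m' \<in> Ms" unfolding m'_def by (rule Msm[OF xa(3)])
      have "smul t (T0 - m') = smul t T0 - smul t m'" by (rule R.sm_diff)
      also have "smul t m' = - m" unfolding m'_def using True by (simp add: R.sm_sm R.sm_minus_right R.sm_neg R.sm_one)
      finally have "smul t (T0 - m') = smul t T0 - - m" .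
      then have xeq: "x = smul t (T0 - m')" using xa(1) by (simp only: diff_minus_eq_add add.commute)
      have "a = t * e" by (rule xa(2))
      also have "\<dots> \<le> t * opnorm ip (T0 - m')" using KEY[OF m'] True by simp
      also have "\<dots> = opnorm ip x" unfolding xeq
        by (rule p_sm[symmetric, OF True Sdiff'[OF T0S MS[OF m']]])
      finally show ?thesis .
    qed
  next
    fix x a y b assume "(x, a) \<in> G0" "(y, b) \<in> G0"
    then obtain m t m' t' where xa: "x = m + smul t T0" "a = t * e" "m \<in> Ms"
      and yb: "y = m' + smul t' T0" "b = t' * e" "m' \<in> Ms" using G0E by metis
    have "x + y = (m + m') + smul (t + t') T0" "a + b = (t + t') * e"
      using xa yb by (simp_all add: R.sm_radd algebra_simps)
    then show "(x + y, a + b) \<in> G0" using G0I Madd xa yb by metis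
  next
    fix r x a assume "(x, a) \<in> G0"
    then obtain m t where xa: "x = m + smul t T0" "a = t * e" "m \<in> Ms" using G0E by blast
    have "smul r x = smul r m + smul (r * t) T0" "r * a = (r * t) * e"
      using xa by (simp_all add: R.sm_add R.sm_sm)
    then show "(smul r x, r * a) \<in> G0" using G0I Msm xa by metis
  next
    fix x a b assume "(x, a) \<in> G0" "(x, b) \<in> G0"
    then obtain m t m' t' where xa: "x = m + smul t T0" "a = t * e" "m \<in> Ms"
      and xb: "x = m' + smul t' T0" "b = t' * e" "m' \<in> Ms" using G0E by metis
    have "t = t'"
    proof (rule ccontr)
      assume ne: "t \<noteq> t'"
      have "smul (t - t') T0 = smul t T0 - smul t' T0" using R.sm_radd[of t "- t'" T0] R.sm_neg[of t' T0] by simp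
      also have "\<dots> = m' - m" using xa(1) xb(1) ab_aux[of m "smul t T0" m' "smul t' T0"] by simp
      finally have "smul (1 / (t - t')) (smul (t - t') T0) = smul (1 / (t - t')) (m' - m)" by simp
      then have "T0 = smul (1 / (t - t')) (m' - m)" using ne by (simp add: R.sm_sm R.sm_one)
      then have "T0 \<in> Ms" using Msm Mdiff xa(3) xb(3) by metis
      from KEY[OF this] show False using e opn0 by simp
    qed
    then show "a = b" using xa xb by simp
  qed
  have G0ne: "G0 \<noteq> {}" using G0I[OF M0] by blast
  obtain h where hG: "\<And>x a. (x, a) \<in> G0 \<Longrightarrow> h x = a" and hp: "\<And>x. x \<in> S \<Longrightarrow> h x \<le> opnorm ip x"
    and hadd: "\<And>x y. x \<in> S \<Longrightarrow> y \<in> S \<Longrightarrow> h (x + y) = h x + h y"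
    and hsm: "\<And>r x. x \<in> S \<Longrightarrow> h (smul r x) = r * h x"
    using R.hahn_banach[OF p_add p_sm lg G0ne] by blast
  have hT0: "h T0 = e" using hG[OF G0I[OF M0, of 1]] by (simp add: R.sm_one)
  have hM: "h m = 0" if "m \<in> Ms" for m using hG[OF G0I[OF that, of 0]] by simp
  have hP: "h p = 0" "h (ci p) = 0" if "p \<in> P" for p
  proof -
    have "p - 0 \<in> D" by (rule DI[OF that P0])
    then have "(p - 0) + ci 0 \<in> Ms" using MI D0 by blast
    then show "h p = 0" using hM ci0 by simp
    have "0 + ci (p - 0) \<in> Ms" using MI D0 \<open>p - 0 \<in> D\<close> by blast
    then show "h (ci p) = 0" using hM by simp
  qed
  define \<psi> where "\<psi> T = (if T \<in> S then complex_of_real (h T) - \<i> * complex_of_real (h (ci T)) else 0)" for T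
  have ReP: "Re (\<psi> T) = h T" if "T \<in> S" for T using that by (simp add: \<psi>_def)
  have psi_sc: "\<psi> (\<lambda>x. sc a (T x)) = a * \<psi> T" if T: "T \<in> S" for a T
  proof -
    obtain r s where a_eq: "a = complex_of_real r + complex_of_real s * \<i>"
      by (metis complex_eq mult.commute)
    have aS: "(\<lambda>x. sc a (T x)) \<in> S" by (rule Ssc[OF T])
    have ciS: "ci T \<in> S" by (rule Sci[OF T])
    have e1: "(\<lambda>x. sc a (T x)) = smul r T + smul s (ci T)"
    proof
      fix x show "sc a (T x) = (smul r T + smul s (ci T)) x"
        by (simp add: a_eq smul_def ci_def sc_radd sc_sc)
    qed
    have ia: "\<i> * a = complex_of_real r * \<i> + complex_of_real (- s)"
      by (simp add: a_eq complex_eq_iff)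
    have e2: "ci (\<lambda>x. sc a (T x)) = smul r (ci T) + smul (- s) T"
    proof
      fix x
      have "ci (\<lambda>x. sc a (T x)) x = sc (\<i> * a) (T x)" by (simp add: ci_def sc_sc)
      also have "\<dots> = sc (complex_of_real r * \<i>) (T x) + sc (complex_of_real (- s)) (T x)"
        unfolding ia by (rule sc_radd)
      also have "\<dots> = (smul r (ci T) + smul (- s) T) x" by (simp add: smul_def ci_def sc_sc)
      finally show "ci (\<lambda>x. sc a (T x)) x = (smul r (ci T) + smul (- s) T) x" .
    qed
    have h1: "h (\<lambda>x. sc a (T x)) = r * h T + s * h (ci T)"
      unfolding e1 using hadd[OF Ssm[OF T] Ssm[OF ciS]] hsm[OF T] hsm[OF ciS] by simp
    have h2: "h (ci (\<lambda>x. sc a (T x))) = r * h (ci T) + (- s) * h T"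
      unfolding e2 using hadd[OF Ssm[OF ciS] Ssm[OF T]] hsm[OF T] hsm[OF ciS] by simp
    have "\<psi> (\<lambda>x. sc a (T x)) = complex_of_real (r * h T + s * h (ci T)) - \<i> * complex_of_real (r * h (ci T) + (- s) * h T)"
      using aS h1 h2 by (simp add: \<psi>_def)
    also have "\<dots> = a * \<psi> T" using T by (simp add: \<psi>_def a_eq complex_eq_iff algebra_simps)
    finally show ?thesis .
  qed
  have psi_add: "\<psi> (\<lambda>x. T x + U x) = \<psi> T + \<psi> U" if T: "T \<in> S" and U: "U \<in> S" for T U
  proof -
    have eq: "(\<lambda>x. T x + U x) = T + U" by (simp add: plus_fun_def)
    have "\<psi> (T + U) = \<psi> T + \<psi> U"
      using T U Sadd'[OF T U] hadd[OF T U] hadd[OF Sci[OF T] Sci[OF U]]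
      by (simp add: \<psi>_def ci_add algebra_simps)
    then show ?thesis using eq by simp
  qed
  have psi_bound: "cmod (\<psi> T) \<le> opnorm ip T" if T: "T \<in> S" for T
  proof (cases "\<psi> T = 0")
    case True then show ?thesis using opnorm_nonneg[OF Sb[OF T]] by simp
  next
    case False
    define z where "z = \<psi> T"
    have z0: "cmod z > 0" using False z_def by simp
    define c where "c = cnj z / complex_of_real (cmod z)"
    have cz: "c * z = complex_of_real (cmod z)"
    proof -
      have "c * z = (z * cnj z) / complex_of_real (cmod z)" unfolding c_def by (simp add: mult.commute)
      also have "z * cnj z = complex_of_real ((cmod z)\<^sup>2)" by (rule complex_norm_square[symmetric])
      finally show ?thesis using z0 by (simp add: power2_eq_square)
    qed
    have cn: "cmod c = 1" unfolding c_def using z0 by (simp add: norm_divide)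
    have cS: "(\<lambda>x. sc c (T x)) \<in> S" by (rule Ssc[OF T])
    have "cmod z = Re (c * z)" using cz by simp
    also have "\<dots> = Re (\<psi> (\<lambda>x. sc c (T x)))" using psi_sc[OF T] z_def by simp
    also have "\<dots> = h (\<lambda>x. sc c (T x))" by (rule ReP[OF cS])
    also have "\<dots> \<le> opnorm ip (\<lambda>x. sc c (T x))" by (rule hp[OF cS])
    also have "\<dots> \<le> cmod c * opnorm ip T" by (rule opnorm_scale[OF Sb[OF T]])
    finally show ?thesis using cn z_def by simp
  qed
  have psi_pos: "\<psi> p = 0" if "p \<in> pos_cone ip S" for p
    using that hP[of p] PS[of p] unfolding P_def by (simp add: \<psi>_def)
  have Kpsi: "\<psi> \<in> quasistates sc ip S"
    unfolding quasistates_def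
  proof (intro CollectI conjI allI ballI impI)
    show "\<And>T. T \<notin> S \<Longrightarrow> \<psi> T = 0" by (simp add: \<psi>_def)
    show "\<And>T U. T \<in> S \<Longrightarrow> U \<in> S \<Longrightarrow> \<psi> (\<lambda>x. T x + U x) = \<psi> T + \<psi> U" by (rule psi_add)
    show "\<And>a T. T \<in> S \<Longrightarrow> \<psi> (\<lambda>x. sc a (T x)) = a * \<psi> T" by (rule psi_sc)
    show "\<And>T. T \<in> S \<Longrightarrow> cmod (\<psi> T) \<le> opnorm ip T" by (rule psi_bound)
    show "\<And>p. p \<in> pos_cone ip S \<Longrightarrow> Im (\<psi> p) = 0" using psi_pos by simp
    show "\<And>p. p \<in> pos_cone ip S \<Longrightarrow> 0 \<le> Re (\<psi> p)" using psi_pos by simp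
  qed
  have ne: "(\<lambda>_. 0) \<noteq> \<psi>"
  proof
    assume "(\<lambda>_. 0) = \<psi>"
    then have "Re (\<psi> T0) = 0" by (metis zero_complex.sel(1))
    then show False using ReP[OF T0S] hT0 e by simp
  qed
  from sep[unfolded separates_points_def] zero_K Kpsi ne
  obtain p where "p \<in> pos_cone ip S" "0 \<noteq> \<psi> p" by blast
  then show False using psi_pos by simp
qed

end

theorem proposition8p2:
  fixes sc :: "complex \<Rightarrow> 'h::ab_group_add \<Rightarrow> 'h"
    and ip :: "'h \<Rightarrow> 'h \<Rightarrow> complex"
    and S :: "('h \<Rightarrow> 'h) set"
  assumes "operator_system sc ip S"
  shows "approx_pos_generated ip S \<longleftrightarrow> separates_points (pos_cone ip S) (quasistates sc ip S)"
proof -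
  have H: "hilbert_space sc ip" using assms unfolding operator_system_def by blast
  interpret osys sc ip S by (rule osys.intro[OF hs.intro[OF H] osys_axioms.intro[OF assms]])
  show ?thesis using forward reverse by blast
qed

end
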